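(* The function $\lambda\mapsto\Pi(\lambda)b(\lambda)$, where $\Pi(\lambda)=\prod_{\beta\in\Sigma_*^+}\lambda_\beta$, is holomorphic on the tube domain $$T_\Pi=\{\lambda\in\mathfrak a^*_{\mathbb C}:|\Re\lambda_\beta|<1/2\ \text{for all }\beta\in\Sigma_*^+\}.$$
   Context: Setting. $\mathfrak a$ is an $l$-dimensional real Euclidean space with inner product extended $\mathbb C$-bilinearly. $\Sigma\subset\mathfrak a^*$ is a (possibly non-reduced) root system with Weyl group $W$. $m:\Sigma\to\,]0,\infty[$ is $W$-invariant, $m_\alpha=m(\alpha)$, and $m_\alpha=0$ for $\alpha\notin\Sigma$. Fix positive roots $\Sigma^+$ with simple roots $\alpha_1,\dots,\alpha_l$, and let $\Sigma_*^+=\{\beta\in\Sigma^+:2\beta\notin\Sigma\}$. Set $\lambda_\alpha=\langle\lambda,\alpha\rangle/\langle\alpha,\alpha\rangle$ and $\rho=\frac12\sum_{\alpha\in\Sigma^+}m_\alpha\alpha$. Let $\beta_j=\alpha_j$ if $2\alpha_j\notin\Sigma$ and $\beta_j=2\alpha_j$ otherwise. Set $\lambda_j=\lambda_{\beta_j}$ and $\rho_j=\frac12(m_{\beta_j}+m_{\beta_j/2}/2)$. $c$-functions. For $\alpha\in\Sigma^+$, $$c_\alpha(\lambda)=\frac{\Gamma(\lambda_\alpha+m_{\alpha/2}/4)}{\Gamma(\lambda_\alpha+m_{\alpha/2}/4+m_\alpha/2)},\qquad c^*_\alpha(\lambda)=\frac{\Gamma(1-\lambda_\alpha-m_{\alpha/2}/4-m_\alpha/2)}{\Gamma(1-\lambda_\alpha-m_{\alpha/2}/4)}.$$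 Set $c=\prod c_\alpha/\prod c_\alpha(\rho)$ and $c^*=\prod c^*_\alpha/\prod c^*_\alpha(-\rho)$. Then $$b(\lambda)=2^{-l}\frac{c(-\lambda)}{c^*(-\lambda)}\prod_{j=1}^l\frac1{\sin(\pi(\lambda_j-\rho_j))}.$$ *)

theory Defs
  imports "HOL-Analysis.Analysis"
begin

text \<open>The real Euclidean space a* (identified with a via the inner product) is modelled as
  real^'n with the standard inner product; l = CARD('n). Its complexification is complex^'n,
  with the inner product extended C-bilinearly.\<close>

definition refl_root :: "real^'n \<Rightarrow> real^'n \<Rightarrow> real^'n" where
  "refl_root a x = x - (2 * (x \<bullet> a) / (a \<bullet> a)) *\<^sub>R a"

definition root_system :: "(real^'n) set \<Rightarrow> bool" where
  "root_system R \<longleftrightarrow> finite R \<and> 0 \<notin> R \<and> span R = UNIV \<and>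
     (\<forall>a\<in>R. \<forall>b\<in>R. refl_root a b \<in> R) \<and>
     (\<forall>a\<in>R. \<forall>b\<in>R. 2 * (a \<bullet> b) / (a \<bullet> a) \<in> \<int>)"

inductive_set weyl_group :: "(real^'n) set \<Rightarrow> (real^'n \<Rightarrow> real^'n) set" for R where
  weyl_id: "id \<in> weyl_group R"
| weyl_step: "a \<in> R \<Longrightarrow> w \<in> weyl_group R \<Longrightarrow> refl_root a \<circ> w \<in> weyl_group R"

definition is_base :: "(real^'n) set \<Rightarrow> (real^'n) set \<Rightarrow> bool" where
  "is_base R S \<longleftrightarrow> S \<subseteq> R \<and> independent S \<and>
     (\<forall>a\<in>R. \<exists>c. (\<forall>s\<in>S. c s \<in> \<int>) \<and> ((\<forall>s\<in>S. c s \<ge> 0) \<or> (\<forall>s\<in>S. c s \<le> 0)) \<and>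
        a = (\<Sum>s\<in>S. c s *\<^sub>R s))"

definition pos_roots :: "(real^'n) set \<Rightarrow> (real^'n) set \<Rightarrow> (real^'n) set" where
  "pos_roots R S = {a\<in>R. \<exists>c. (\<forall>s\<in>S. c s \<ge> 0) \<and> a = (\<Sum>s\<in>S. c s *\<^sub>R s)}"

definition pos_roots_star :: "(real^'n) set \<Rightarrow> (real^'n) set \<Rightarrow> (real^'n) set" where
  "pos_roots_star R S = {b \<in> pos_roots R S. 2 *\<^sub>R b \<notin> R}"

definition cpair :: "complex^'n \<Rightarrow> real^'n \<Rightarrow> complex" where
  "cpair z a = (\<Sum>i\<in>UNIV. z $ i * complex_of_real (a $ i))"

definition lam_coord :: "complex^'n \<Rightarrow> real^'n \<Rightarrow> complex" where
  "lam_coord z a = cpair z a / complex_of_real (a \<bullet> a)"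

definition cvec :: "real^'n \<Rightarrow> complex^'n" where
  "cvec x = (\<chi> i. complex_of_real (x $ i))"

definition rho :: "(real^'n) set \<Rightarrow> (real^'n \<Rightarrow> real) \<Rightarrow> (real^'n) set \<Rightarrow> real^'n" where
  "rho R m S = (1/2) *\<^sub>R (\<Sum>a\<in>pos_roots R S. m a *\<^sub>R a)"

text \<open>m_{alpha/2}, written with the convention m = 0 off Sigma.\<close>
definition mhalf :: "(real^'n \<Rightarrow> real) \<Rightarrow> real^'n \<Rightarrow> real" where
  "mhalf m a = m ((1/2) *\<^sub>R a)"

definition c_alpha :: "(real^'n \<Rightarrow> real) \<Rightarrow> real^'n \<Rightarrow> complex^'n \<Rightarrow> complex" where
  "c_alpha m a z = Gamma (lam_coord z a + of_real (mhalf m a / 4)) /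
                   Gamma (lam_coord z a + of_real (mhalf m a / 4) + of_real (m a / 2))"

definition cstar_alpha :: "(real^'n \<Rightarrow> real) \<Rightarrow> real^'n \<Rightarrow> complex^'n \<Rightarrow> complex" where
  "cstar_alpha m a z = Gamma (1 - lam_coord z a - of_real (mhalf m a / 4) - of_real (m a / 2)) /
                       Gamma (1 - lam_coord z a - of_real (mhalf m a / 4))"

definition c_fun :: "(real^'n) set \<Rightarrow> (real^'n \<Rightarrow> real) \<Rightarrow> (real^'n) set \<Rightarrow> complex^'n \<Rightarrow> complex" where
  "c_fun R m S z = (\<Prod>a\<in>pos_roots R S. c_alpha m a z) /
                   (\<Prod>a\<in>pos_roots R S. c_alpha m a (cvec (rho R m S)))"

definition cstar_fun :: "(real^'n) set \<Rightarrow> (real^'n \<Rightarrow> real) \<Rightarrow> (real^'n) set \<Rightarrow> complex^'n \<Rightarrow> complex" where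
  "cstar_fun R m S z = (\<Prod>a\<in>pos_roots R S. cstar_alpha m a z) /
                       (\<Prod>a\<in>pos_roots R S. cstar_alpha m a (- cvec (rho R m S)))"

definition beta_of :: "(real^'n) set \<Rightarrow> real^'n \<Rightarrow> real^'n" where
  "beta_of R a = (if 2 *\<^sub>R a \<in> R then 2 *\<^sub>R a else a)"

definition rho_j :: "(real^'n) set \<Rightarrow> (real^'n \<Rightarrow> real) \<Rightarrow> real^'n \<Rightarrow> real" where
  "rho_j R m a = (m (beta_of R a) + mhalf m (beta_of R a) / 2) / 2"

definition sin_arg :: "(real^'n) set \<Rightarrow> (real^'n \<Rightarrow> real) \<Rightarrow> real^'n \<Rightarrow> complex^'n \<Rightarrow> complex" where
  "sin_arg R m a z = of_real pi * (lam_coord z (beta_of R a) - of_real (rho_j R m a))"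

definition b_fun :: "(real^'n) set \<Rightarrow> (real^'n \<Rightarrow> real) \<Rightarrow> (real^'n) set \<Rightarrow> complex^'n \<Rightarrow> complex" where
  "b_fun R m S z = inverse (2 ^ CARD('n)) * (c_fun R m S (- z) / cstar_fun R m S (- z)) *
                   (\<Prod>a\<in>S. 1 / sin (sin_arg R m a z))"

definition Pi_fun :: "(real^'n) set \<Rightarrow> (real^'n) set \<Rightarrow> complex^'n \<Rightarrow> complex" where
  "Pi_fun R S z = (\<Prod>b\<in>pos_roots_star R S. lam_coord z b)"

definition tube :: "(real^'n) set \<Rightarrow> (real^'n) set \<Rightarrow> (complex^'n) set" where
  "tube R S = {z. \<forall>b\<in>pos_roots_star R S. \<bar>Re (lam_coord z b)\<bar> < 1/2}"

text \<open>Points where the defining formula of b makes sense: no Gamma function in the formula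
  (evaluated at -z) is at a pole and no sine in a denominator vanishes.\<close>
definition b_regular :: "(real^'n) set \<Rightarrow> (real^'n \<Rightarrow> real) \<Rightarrow> (real^'n) set \<Rightarrow> complex^'n \<Rightarrow> bool" where
  "b_regular R m S z \<longleftrightarrow>
     (\<forall>a\<in>pos_roots R S.
        lam_coord (- z) a + of_real (mhalf m a / 4) \<notin> \<int>\<^sub>\<le>\<^sub>0 \<and>
        lam_coord (- z) a + of_real (mhalf m a / 4) + of_real (m a / 2) \<notin> \<int>\<^sub>\<le>\<^sub>0 \<and>
        1 - lam_coord (- z) a - of_real (mhalf m a / 4) - of_real (m a / 2) \<notin> \<int>\<^sub>\<le>\<^sub>0 \<and>
        1 - lam_coord (- z) a - of_real (mhalf m a / 4) \<notin> \<int>\<^sub>\<le>\<^sub>0) \<and>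
     (\<forall>a\<in>S. sin (sin_arg R m a z) \<noteq> 0)"

definition holo_several :: "(complex^'n \<Rightarrow> complex) \<Rightarrow> (complex^'n) set \<Rightarrow> bool" where
  "holo_several f U \<longleftrightarrow> (\<forall>z\<in>U. \<exists>f'. (f has_derivative f') (at z) \<and>
                                   (\<forall>c v. f' (c *s v) = c * f' v))"

end

theory Submission
  imports Defs
begin



definition hol_at :: "(complex^'n \<Rightarrow> complex) \<Rightarrow> complex^'n \<Rightarrow> bool" where
  "hol_at f z \<longleftrightarrow> (\<exists>f'. (f has_derivative f') (at z) \<and> (\<forall>c v. f' (c *s v) = c * f' v))"

lemma hol_const: "hol_at (\<lambda>x. k) z"
  unfolding hol_at_def by (intro exI[of _ "\<lambda>_. 0"]) auto

lemma hol_mult: "hol_at f z \<Longrightarrow> hol_at g z \<Longrightarrow> hol_at (\<lambda>x. f x * g x) z"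
  unfolding hol_at_def
proof (elim exE conjE)
  fix f' g' assume f: "(f has_derivative f') (at z)" "\<forall>c v. f' (c *s v) = c * f' v"
    and g: "(g has_derivative g') (at z)" "\<forall>c v. g' (c *s v) = c * g' v"
  show "\<exists>h'. ((\<lambda>x. f x * g x) has_derivative h') (at z) \<and> (\<forall>c v. h' (c *s v) = c * h' v)"
    apply (intro exI[of _ "\<lambda>h. f z * g' h + f' h * g z"] conjI)
     apply (rule has_derivative_mult[OF f(1) g(1)])
    using f(2) g(2) by (simp add: algebra_simps)
qed

lemma hol_prod: "finite A \<Longrightarrow> (\<And>i. i \<in> A \<Longrightarrow> hol_at (f i) z) \<Longrightarrow> hol_at (\<lambda>x. \<Prod>i\<in>A. f i x) z"
  by (induction A rule: finite_induct) (auto intro: hol_mult hol_const)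

lemma hol_comp: "hol_at L z \<Longrightarrow> (g has_field_derivative D) (at (L z)) \<Longrightarrow> hol_at (\<lambda>x. g (L x)) z"
  unfolding hol_at_def has_field_derivative_def
proof (elim exE conjE)
  fix L' assume L: "(L has_derivative L') (at z)" "\<forall>c v. L' (c *s v) = c * L' v"
    and g: "(g has_derivative (*) D) (at (L z))"
  show "\<exists>h'. ((\<lambda>x. g (L x)) has_derivative h') (at z) \<and> (\<forall>c v. h' (c *s v) = c * h' v)"
    apply (intro exI[of _ "(*) D \<circ> L'"] conjI)
    using diff_chain_at[OF L(1) g] apply (simp add: o_def)
    using L(2) by (simp add: algebra_simps)
qed

lemma cpair_lin: "cpair (c *s v) a = c * cpair v a" "cpair (v + w) a = cpair v a + cpair w a"
  "cpair (r *\<^sub>R v) a = r *\<^sub>R cpair v a" "cpair (- v) a = - cpair v a"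
  by (auto simp: cpair_def sum_distrib_left algebra_simps sum.distrib scaleR_sum_right sum_negf)

lemma hol_lam: "hol_at (\<lambda>x. lam_coord x (b::real^'n)) z"
proof -
  have lin: "linear (\<lambda>x. lam_coord x b)"
  proof (rule linearI)
    fix x y :: "complex^'n" and r :: real
    show "lam_coord (x + y) b = lam_coord x b + lam_coord y b"
      by (simp add: lam_coord_def cpair_lin add_divide_distrib)
    show "lam_coord (r *\<^sub>R x) b = r *\<^sub>R lam_coord x b"
      unfolding lam_coord_def cpair_lin(3) by (simp add: scaleR_conv_of_real)
  qed
  show ?thesis unfolding hol_at_def
    apply (intro exI[of _ "\<lambda>x. lam_coord x b"] conjI)
    using lin linear_conv_bounded_linear bounded_linear_imp_has_derivative apply blast
    by (simp add: lam_coord_def cpair_lin)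
qed



lemma half_not_int: "(1/2::real) \<notin> \<int>"
proof
  assume "(1/2::real) \<in> \<int>"
  then obtain n where "(1/2::real) = of_int n" by (auto elim: Ints_cases)
  then have "(1::real) = 2 * of_int n" by simp
  then have "(1::int) = 2 * n" by (metis of_int_1 of_int_eq_iff of_int_mult of_int_numeral)
  then show False by presburger
qed

lemma no_four: assumes "root_system R" "a \<in> R" shows "4 *\<^sub>R a \<notin> R"
proof
  assume h: "4 *\<^sub>R a \<in> R"
  have "a \<noteq> 0" using assms unfolding root_system_def by auto
  then have aa: "a \<bullet> a \<noteq> 0" by simp
  have "2 * ((4 *\<^sub>R a) \<bullet> a) / ((4 *\<^sub>R a) \<bullet> (4 *\<^sub>R a)) \<in> \<int>"
    using assms h unfolding root_system_def by blast
  moreover have "2 * ((4 *\<^sub>R a) \<bullet> a) / ((4 *\<^sub>R a) \<bullet> (4 *\<^sub>R a)) = 2 * (4 * (a \<bullet> a)) / (16 * (a \<bullet> a))"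
    by simp
  moreover have "2 * (4 * (a \<bullet> a)) / (16 * (a \<bullet> a)) = (1/2::real)"
    using aa by (simp only: field_simps) simp
  ultimately show False using half_not_int by metis
qed

lemma pos_scale: assumes "b \<in> pos_roots R S" "k > 0" "k *\<^sub>R b \<in> R" shows "k *\<^sub>R b \<in> pos_roots R S"
proof -
  obtain c where c: "\<forall>s\<in>S. c s \<ge> 0" "b = (\<Sum>s\<in>S. c s *\<^sub>R s)" using assms(1) unfolding pos_roots_def mem_Collect_eq by (elim conjE exE) blast
  have "k *\<^sub>R b = (\<Sum>s\<in>S. k *\<^sub>R (c s *\<^sub>R s))" unfolding c(2) by (rule scaleR_sum_right)
  also have "\<dots> = (\<Sum>s\<in>S. (k * c s) *\<^sub>R s)" by (simp only: scaleR_scaleR)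
  finally have "k *\<^sub>R b = (\<Sum>s\<in>S. (k * c s) *\<^sub>R s)" .
  moreover have "\<forall>s\<in>S. k * c s \<ge> 0" using c(1) assms(2) by simp
  ultimately show ?thesis using assms(3) unfolding pos_roots_def mem_Collect_eq
    by (intro conjI exI[of _ "\<lambda>s. k * c s"]) auto
qed

lemma pos_sub: "pos_roots R S \<subseteq> R" "pos_roots_star R S \<subseteq> pos_roots R S"
  unfolding pos_roots_def pos_roots_star_def by auto

lemma base_pos: assumes "is_base R S" "a \<in> S" shows "a \<in> pos_roots R S"
proof -
  have fin: "finite S" using assms unfolding is_base_def using independent_imp_finite by blast
  have "(\<Sum>s\<in>S. (if s = a then 1 else 0) *\<^sub>R s) = a"
    using fin assms(2) by (simp add: if_distrib[of "\<lambda>x. x *\<^sub>R _"] sum.delta cong: if_cong)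
  then show ?thesis using assms unfolding pos_roots_def is_base_def
    by (intro CollectI conjI) (auto intro!: exI[of _ "\<lambda>s. if s = a then 1 else 0"])
qed

lemma base_beta: assumes "root_system R" "is_base R S" "a \<in> S" shows "beta_of R a \<in> pos_roots_star R S"
proof -
  have aP: "a \<in> pos_roots R S" by (rule base_pos[OF assms(2,3)])
  have aR: "a \<in> R" using aP pos_sub by blast
  show ?thesis
  proof (cases "2 *\<^sub>R a \<in> R")
    case True
    have "2 *\<^sub>R a \<in> pos_roots R S" using pos_scale[OF aP _ True] by simp
    moreover have "2 *\<^sub>R (2 *\<^sub>R a) \<notin> R" using no_four[OF assms(1) aR] by simp
    ultimately show ?thesis using True unfolding beta_of_def pos_roots_star_def by simp
  next
    case False
    then show ?thesis using aP unfolding beta_of_def pos_roots_star_def by simp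
  qed
qed

lemma base_beta_inj: assumes "root_system R" "is_base R S" shows "inj_on (beta_of R) S"
proof
  fix a b assume ab: "a \<in> S" "b \<in> S" "beta_of R a = beta_of R b"
  have ind: "independent S" using assms unfolding is_base_def by auto
  have nz: "x \<noteq> 0" if "x \<in> S" for x using that assms unfolding is_base_def root_system_def by auto
  have dbl: False if "x \<in> S" "y \<in> S" "y = 2 *\<^sub>R x" for x y
  proof -
    have "x \<noteq> y"
    proof
      assume "x = y"
      then have "1 *\<^sub>R x = 2 *\<^sub>R x" using that(3) by simp
      then have "(1::real) = 2" using nz[OF that(1)] scaleR_cancel_right by blast
      then show False by simp
    qed
    then have "y \<in> span (S - {y})" using that by (simp add: span_base span_mul)
    then show False using ind that(2) unfolding dependent_def by blast
  qed
  show "a = b"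
  proof (cases "2 *\<^sub>R a \<in> R"; cases "2 *\<^sub>R b \<in> R")
    assume "2 *\<^sub>R a \<in> R" "2 *\<^sub>R b \<in> R"
    then show ?thesis using ab(3) unfolding beta_of_def by simp
  next
    assume "2 *\<^sub>R a \<in> R" "2 *\<^sub>R b \<notin> R"
    then have "b = 2 *\<^sub>R a" using ab(3) unfolding beta_of_def by simp
    then show ?thesis using dbl ab by blast
  next
    assume "2 *\<^sub>R a \<notin> R" "2 *\<^sub>R b \<in> R"
    then have "a = 2 *\<^sub>R b" using ab(3) unfolding beta_of_def by simp
    then show ?thesis using dbl ab by blast
  next
    assume "2 *\<^sub>R a \<notin> R" "2 *\<^sub>R b \<notin> R"
    then show ?thesis using ab(3) unfolding beta_of_def by simp
  qed
qed



lemma sin_nz: fixes u :: complex assumes "u \<notin> \<int>\<^sub>\<le>\<^sub>0" "1 - u \<notin> \<int>\<^sub>\<le>\<^sub>0" shows "sin (of_real pi * u) \<noteq> 0"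
proof
  assume "sin (of_real pi * u) = 0"
  then obtain n :: int where n: "of_real pi * u = of_real (of_int n * pi)" by (auto simp: sin_eq_0)
  then have "u = of_int n" by (simp add: field_simps)
  show False
  proof (cases "n \<le> 0")
    case True then show False using assms(1) \<open>u = of_int n\<close> by (auto simp: nonpos_Ints_def)
  next
    case False
    have "1 - u = of_int (1 - n)" using \<open>u = of_int n\<close> by simp
    moreover have "1 - n \<le> 0" using False by simp
    ultimately have "1 - u \<in> \<int>\<^sub>\<le>\<^sub>0" unfolding nonpos_Ints_def by blast
    then show False using assms(2) by blast
  qed
qed

lemma sin_nz_int: fixes w :: complex assumes "sin (of_real pi * w) \<noteq> 0" shows "w \<notin> \<int>\<^sub>\<le>\<^sub>0"
proof
  assume "w \<in> \<int>\<^sub>\<le>\<^sub>0"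
  then obtain n :: int where "w = of_int n" by (auto elim: nonpos_Ints_cases)
  then have "of_real pi * w = of_real (of_int n * pi)" by simp
  then have "sin (of_real pi * w) = 0" by (simp only: sin_eq_0) blast
  then show False using assms by simp
qed

lemma refl_ratio: fixes u v :: complex
  assumes "u \<notin> \<int>\<^sub>\<le>\<^sub>0" "v \<notin> \<int>\<^sub>\<le>\<^sub>0" "1 - v \<notin> \<int>\<^sub>\<le>\<^sub>0" "1 - u \<notin> \<int>\<^sub>\<le>\<^sub>0"
  shows "(Gamma u / Gamma v) / (Gamma (1 - v) / Gamma (1 - u)) = sin (of_real pi * v) / sin (of_real pi * u)"
proof -
  have su: "sin (of_real pi * u) \<noteq> 0" using sin_nz assms by blast
  have sv: "sin (of_real pi * v) \<noteq> 0" using sin_nz assms by blast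
  have g: "Gamma u \<noteq> 0" "Gamma v \<noteq> 0" "Gamma (1 - v) \<noteq> 0" "Gamma (1 - u) \<noteq> 0"
    using assms Gamma_nonzero by auto
  have "(Gamma u / Gamma v) / (Gamma (1 - v) / Gamma (1 - u)) = (Gamma u * Gamma (1 - u)) / (Gamma v * Gamma (1 - v))"
    using g by (simp add: field_simps)
  also have "\<dots> = (of_real pi / sin (of_real pi * u)) / (of_real pi / sin (of_real pi * v))"
    by (simp only: Gamma_reflection_complex)
  also have "\<dots> = sin (of_real pi * v) / sin (of_real pi * u)"
    using su sv by (simp add: field_simps)
  finally show ?thesis .
qed

lemma lam_over_sin: fixes w :: complex assumes "sin (of_real pi * w) \<noteq> 0"
  shows "Gamma (1 + w) * Gamma (1 - w) / of_real pi = w / sin (of_real pi * w)"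
proof -
  have "w \<notin> \<int>\<^sub>\<le>\<^sub>0" using sin_nz_int assms by blast
  then have "Gamma (1 + w) = w * Gamma w" using Gamma_plus1[of w] by (simp add: add.commute)
  then have "Gamma (1 + w) * Gamma (1 - w) / of_real pi = w * (Gamma w * Gamma (1 - w)) / of_real pi" by simp
  also have "\<dots> = w / sin (of_real pi * w)" by (simp add: Gamma_reflection_complex)
  finally show ?thesis .
qed

lemma group_red: fixes w M :: complex assumes "sin (of_real pi * w) \<noteq> 0"
  shows "w * (sin (of_real pi * (w - M)) / sin (of_real pi * w)) =
         sin (of_real pi * (w - M)) * (Gamma (1 + w) * Gamma (1 - w) / of_real pi)"
  using lam_over_sin[OF assms] by simp

lemma group_nonred: fixes w c mb :: complex
  assumes "sin (of_real pi * (w - c)) \<noteq> 0" "sin (of_real pi * (2 * w)) \<noteq> 0"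
  shows "w * ((sin (of_real pi * (w - c - mb)) / sin (of_real pi * (w - c))) *
              (sin (of_real pi * (2 * w - 2 * c)) / sin (of_real pi * (2 * w)))) =
         sin (of_real pi * (w - (c + mb))) *
           (cos (of_real pi * (w - c)) * (Gamma (1 + 2 * w) * Gamma (1 - 2 * w) / of_real pi))"
proof -
  have d: "sin (of_real pi * (2 * w - 2 * c)) = 2 * sin (of_real pi * (w - c)) * cos (of_real pi * (w - c))"
    using sin_double[of "of_real pi * (w - c)"] by (simp add: algebra_simps)
  have l: "Gamma (1 + 2 * w) * Gamma (1 - 2 * w) / of_real pi = 2 * w / sin (of_real pi * (2 * w))"
    using lam_over_sin[OF assms(2)] by simp
  show ?thesis unfolding d l using assms by (simp add: field_simps)
qed



lemma Re_pos_nonpos: fixes x :: complex assumes "Re x > 0" shows "x \<notin> \<int>\<^sub>\<le>\<^sub>0"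
proof
  assume "x \<in> \<int>\<^sub>\<le>\<^sub>0"
  then obtain n :: int where "x = of_int n" "n \<le> 0" by (auto elim: nonpos_Ints_cases)
  then show False using assms by simp
qed

definition strip :: "complex set" where "strip = {w. Re w < 1/2} \<inter> {w. Re w > -1/2}"

lemma strip_open: "open strip" unfolding strip_def by (intro open_Int open_halfspace_Re_lt open_halfspace_Re_gt)

lemma diff_of_hol: assumes "f holomorphic_on strip" "\<bar>Re w\<bar> < 1/2" shows "\<exists>D. (f has_field_derivative D) (at w)"
proof -
  have "w \<in> strip" using assms(2) unfolding strip_def by auto
  then show ?thesis using holomorphic_on_imp_differentiable_at[OF assms(1) strip_open]
    unfolding field_differentiable_def by blast
qed

lemma H1_deriv: "\<bar>Re w\<bar> < 1/2 \<Longrightarrow> \<exists>D. ((\<lambda>w. Gamma (1 + w) * Gamma (1 - w) / of_real pi) has_field_derivative D) (at w)"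
  apply (rule diff_of_hol)
   apply (intro holomorphic_intros)
  by (auto simp: strip_def intro!: Re_pos_nonpos)

lemma H2_deriv: "\<bar>Re w\<bar> < 1/2 \<Longrightarrow> \<exists>D. ((\<lambda>w. cos (of_real pi * (w - c)) * (Gamma (1 + 2 * w) * Gamma (1 - 2 * w) / of_real pi)) has_field_derivative D) (at w)"
  apply (rule diff_of_hol)
   apply (intro holomorphic_intros)
  by (auto simp: strip_def intro!: Re_pos_nonpos)

lemma sin_deriv: "\<exists>D. ((\<lambda>w. sin (of_real pi * (w - c))) has_field_derivative D) (at (w::complex))"
  by (rule exI) (rule derivative_eq_intros refl)+


lemma lam_neg: "lam_coord (- z) a = - lam_coord z a"
  by (simp add: lam_coord_def cpair_lin)

lemma lam_scale: assumes "k \<noteq> 0" shows "lam_coord z (k *\<^sub>R a) = lam_coord z a / of_real k"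
proof -
  have c: "cpair z (k *\<^sub>R a) = of_real k * cpair z a"
    by (simp add: cpair_def sum_distrib_left algebra_simps)
  show ?thesis
  proof (cases "a \<bullet> a = 0")
    case True then show ?thesis by (simp add: lam_coord_def)
  next
    case False
    then show ?thesis using assms unfolding lam_coord_def c by (simp add: field_simps power2_eq_square)
  qed
qed

lemma root_ratio: fixes x A M :: complex
  assumes "x + A \<notin> \<int>\<^sub>\<le>\<^sub>0" "x + A + M \<notin> \<int>\<^sub>\<le>\<^sub>0" "1 - x - A - M \<notin> \<int>\<^sub>\<le>\<^sub>0" "1 - x - A \<notin> \<int>\<^sub>\<le>\<^sub>0"
  shows "(Gamma (x + A) / Gamma (x + A + M)) / (Gamma (1 - x - A - M) / Gamma (1 - x - A)) =
           sin (of_real pi * (- x - A - M)) / sin (of_real pi * (- x - A))"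
    and "sin (of_real pi * (- x - A)) \<noteq> 0"
proof -
  have e1: "1 - (x + A + M) = 1 - x - A - M" "1 - (x + A) = 1 - x - A" by simp_all
  have r: "(Gamma (x + A) / Gamma (x + A + M)) / (Gamma (1 - x - A - M) / Gamma (1 - x - A)) =
           sin (of_real pi * (x + A + M)) / sin (of_real pi * (x + A))"
    using refl_ratio[of "x + A" "x + A + M"] assms unfolding e1 by blast
  have s1: "sin (of_real pi * (- x - A - M)) = - sin (of_real pi * (x + A + M))"
  proof -
    have "of_real pi * (- x - A - M) = - (of_real pi * (x + A + M))" by (simp add: algebra_simps)
    then show ?thesis by (simp only: sin_minus)
  qed
  have s2: "sin (of_real pi * (- x - A)) = - sin (of_real pi * (x + A))"
  proof -
    have "of_real pi * (- x - A) = - (of_real pi * (x + A))" by (simp add: algebra_simps)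
    then show ?thesis by (simp only: sin_minus)
  qed
  show "(Gamma (x + A) / Gamma (x + A + M)) / (Gamma (1 - x - A - M) / Gamma (1 - x - A)) =
           sin (of_real pi * (- x - A - M)) / sin (of_real pi * (- x - A))"
    unfolding r s1 s2 by simp
  have "sin (of_real pi * (x + A)) \<noteq> 0" using sin_nz[of "x + A"] assms e1 by simp
  then show "sin (of_real pi * (- x - A)) \<noteq> 0" unfolding s2 by simp
qed



theorem mainTheorem6:
  fixes R S :: "(real^'n) set" and m :: "real^'n \<Rightarrow> real"
  assumes "root_system R"
    and "\<forall>a\<in>R. m a > 0"
    and "\<forall>a. a \<notin> R \<longrightarrow> m a = 0"
    and "\<forall>w\<in>weyl_group R. \<forall>a\<in>R. m (w a) = m a"
    and "is_base R S"
  shows "\<exists>F. holo_several F (tube R S) \<and>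
           (\<forall>z\<in>tube R S. b_regular R m S z \<longrightarrow> F z = Pi_fun R S z * b_fun R m S z)"
proof -
  note rs = assms(1) and base = assms(5)
  define P where "P = pos_roots R S"
  define Ps where "Ps = pos_roots_star R S"
  define A :: "real^'n \<Rightarrow> real" where "A = (\<lambda>a. mhalf m a / 4)"
  define M :: "real^'n \<Rightarrow> real" where "M = (\<lambda>a. m a / 2)"
  define rr :: "real^'n \<Rightarrow> real" where "rr = (\<lambda>b. (m b + mhalf m b / 2) / 2)"
  define H :: "real^'n \<Rightarrow> complex \<Rightarrow> complex" where "H = (\<lambda>b w. if (1/2) *\<^sub>R b \<in> R
      then cos (of_real pi * (w - of_real (A b))) * (Gamma (1 + 2 * w) * Gamma (1 - 2 * w) / of_real pi)
      else Gamma (1 + w) * Gamma (1 - w) / of_real pi)"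
  define ratio :: "real^'n \<Rightarrow> complex^'n \<Rightarrow> complex" where "ratio = (\<lambda>a z. sin (of_real pi * (lam_coord z a - of_real (A a) - of_real (M a))) /
                                      sin (of_real pi * (lam_coord z a - of_real (A a))))"
  define K where "K = inverse (2 ^ CARD('n)) *
     ((\<Prod>a\<in>P. cstar_alpha m a (- cvec (rho R m S))) / (\<Prod>a\<in>P. c_alpha m a (cvec (rho R m S))))"
  define F where "F = (\<lambda>z. K * ((\<Prod>b\<in>Ps. H b (lam_coord z b)) *
       (\<Prod>b\<in>Ps - beta_of R ` S. sin (of_real pi * (lam_coord z b - of_real (rr b))))))"
  have finR: "finite R" using rs unfolding root_system_def by auto
  have PR: "P \<subseteq> R" and PsP: "Ps \<subseteq> P" unfolding P_def Ps_def by (rule pos_sub(1), rule pos_sub(2))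
  have finP: "finite P" using finR PR finite_subset by blast
  have finPs: "finite Ps" using finP PsP finite_subset by blast
  have finS: "finite S" using base unfolding is_base_def using independent_imp_finite by blast
  have betaS: "beta_of R ` S \<subseteq> Ps" using base_beta[OF rs base] unfolding Ps_def by auto
  have injS: "inj_on (beta_of R) S" using base_beta_inj[OF rs base] .

  have hol: "hol_at F z" if zt: "z \<in> tube R S" for z
  proof -
    have re: "\<bar>Re (lam_coord z b)\<bar> < 1/2" if "b \<in> Ps" for b
      using zt that unfolding tube_def Ps_def by auto
    have hH: "hol_at (\<lambda>x. H b (lam_coord x b)) z" if b: "b \<in> Ps" for b
    proof -
      have "\<exists>D. (H b has_field_derivative D) (at (lam_coord z b))"
      proof (cases "(1/2) *\<^sub>R b \<in> R")
        case True
        then have "H b = (\<lambda>w. cos (of_real pi * (w - of_real (A b))) * (Gamma (1 + 2 * w) * Gamma (1 - 2 * w) / of_real pi))"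
          unfolding H_def by simp
        then show ?thesis using H2_deriv[OF re[OF b]] by simp
      next
        case False
        then have "H b = (\<lambda>w. Gamma (1 + w) * Gamma (1 - w) / of_real pi)"
          unfolding H_def by simp
        then show ?thesis using H1_deriv[OF re[OF b]] by simp
      qed
      then obtain D where "(H b has_field_derivative D) (at (lam_coord z b))" by blast
      then show ?thesis using hol_comp[OF hol_lam] by blast
    qed
    have hS: "hol_at (\<lambda>x. sin (of_real pi * (lam_coord x b - of_real (rr b)))) z" for b
    proof -
      obtain D where "((\<lambda>w. sin (of_real pi * (w - of_real (rr b)))) has_field_derivative D) (at (lam_coord z b))"
        using sin_deriv by blast
      then show ?thesis using hol_comp[OF hol_lam, of "\<lambda>w. sin (of_real pi * (w - of_real (rr b)))"] by blast
    qed
    show ?thesis unfolding F_def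
      by (intro hol_mult hol_const hol_prod finPs hH hS) (use finPs in auto)
  qed

  have ident: "F z = Pi_fun R S z * b_fun R m S z" if zt: "z \<in> tube R S" and reg: "b_regular R m S z" for z
  proof -
    define lam where "lam = (\<lambda>a. lam_coord z a)"
    have rt: "c_alpha m a (- z) / cstar_alpha m a (- z) = ratio a z \<and>
              sin (of_real pi * (lam a - of_real (A a))) \<noteq> 0" if a: "a \<in> P" for a
    proof -
      have c: "lam_coord (- z) a + of_real (mhalf m a / 4) \<notin> \<int>\<^sub>\<le>\<^sub>0"
        "lam_coord (- z) a + of_real (mhalf m a / 4) + of_real (m a / 2) \<notin> \<int>\<^sub>\<le>\<^sub>0"
        "1 - lam_coord (- z) a - of_real (mhalf m a / 4) - of_real (m a / 2) \<notin> \<int>\<^sub>\<le>\<^sub>0"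
        "1 - lam_coord (- z) a - of_real (mhalf m a / 4) \<notin> \<int>\<^sub>\<le>\<^sub>0"
        using reg a unfolding b_regular_def P_def by auto
      note q = root_ratio[OF c]
      show ?thesis using q unfolding c_alpha_def cstar_alpha_def ratio_def lam_def A_def M_def lam_neg
        by simp
    qed
    have sarg: "sin (sin_arg R m a z) \<noteq> 0" if "a \<in> S" for a
      using reg that unfolding b_regular_def by auto
    have div: "(a / b) / (c / d) = (a / c) * (d / b)" for a b c d :: complex
      by (simp add: divide_inverse mult_ac inverse_mult_distrib)
    have s1: "Pi_fun R S z * b_fun R m S z =
       K * ((\<Prod>b\<in>Ps. lam b) * (\<Prod>a\<in>P. ratio a z)) * (\<Prod>a\<in>S. 1 / sin (sin_arg R m a z))"
    proof -
      have "c_fun R m S (- z) / cstar_fun R m S (- z) =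
            (\<Prod>a\<in>P. c_alpha m a (- z) / cstar_alpha m a (- z)) *
            ((\<Prod>a\<in>P. cstar_alpha m a (- cvec (rho R m S))) / (\<Prod>a\<in>P. c_alpha m a (cvec (rho R m S))))"
        unfolding c_fun_def cstar_fun_def div prod_dividef P_def ..
      also have "(\<Prod>a\<in>P. c_alpha m a (- z) / cstar_alpha m a (- z)) = (\<Prod>a\<in>P. ratio a z)"
        using rt by (intro prod.cong) auto
      finally show ?thesis unfolding Pi_fun_def b_fun_def K_def lam_def Ps_def by (simp add: mult_ac)
    qed
    define h where "h = (\<lambda>b::real^'n. (1/2::real) *\<^sub>R b)"
    define T where "T = {b\<in>Ps. h b \<in> R}"
    have half_P: "h b \<in> P" if "b \<in> T" for b
      using pos_scale[of b R S "1/2"] that PsP unfolding T_def h_def P_def by auto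
    have Peq: "P = Ps \<union> h ` T"
    proof
      show "Ps \<union> h ` T \<subseteq> P" using PsP half_P by auto
      show "P \<subseteq> Ps \<union> h ` T"
      proof
        fix g assume g: "g \<in> P"
        show "g \<in> Ps \<union> h ` T"
        proof (cases "2 *\<^sub>R g \<in> R")
          case False then show ?thesis using g unfolding P_def Ps_def pos_roots_star_def by auto
        next
          case True
          have gR: "g \<in> R" using g PR by auto
          have "2 *\<^sub>R g \<in> P" using pos_scale[of g R S 2] g True unfolding P_def by auto
          moreover have "2 *\<^sub>R (2 *\<^sub>R g) \<notin> R" using no_four[OF rs gR] by simp
          ultimately have "2 *\<^sub>R g \<in> Ps" unfolding Ps_def pos_roots_star_def P_def by auto
          moreover have "h (2 *\<^sub>R g) = g" unfolding h_def by simp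
          ultimately have "g \<in> h ` T" unfolding T_def using gR by (metis (mono_tags, lifting) image_eqI mem_Collect_eq)
          then show ?thesis by blast
        qed
      qed
    qed
    have disj: "Ps \<inter> h ` T = {}"
    proof -
      have "h b \<notin> Ps" if "b \<in> T" for b
      proof -
        have "2 *\<^sub>R h b = b" unfolding h_def by simp
        moreover have "b \<in> R" using that PsP PR unfolding T_def by auto
        ultimately show ?thesis unfolding Ps_def pos_roots_star_def by auto
      qed
      then show ?thesis by auto
    qed
    have injh: "inj_on h T" unfolding h_def by (rule inj_onI) simp
    have finT: "finite T" using finPs unfolding T_def by auto
    define G where "G = (\<lambda>b. ratio b z * (if h b \<in> R then ratio (h b) z else 1))"
    have s2: "(\<Prod>a\<in>P. ratio a z) = (\<Prod>b\<in>Ps. G b)"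
    proof -
      have "(\<Prod>a\<in>P. ratio a z) = (\<Prod>a\<in>Ps. ratio a z) * (\<Prod>a\<in>h ` T. ratio a z)"
        unfolding Peq by (rule prod.union_disjoint) (use finPs finT disj in auto)
      also have "(\<Prod>a\<in>h ` T. ratio a z) = (\<Prod>b\<in>T. ratio (h b) z)"
        using prod.reindex[OF injh] by simp
      also have "\<dots> = (\<Prod>b\<in>Ps. if h b \<in> R then ratio (h b) z else 1)"
        unfolding T_def by (rule prod.inter_filter[OF finPs])
      finally show ?thesis unfolding G_def prod.distrib by simp
    qed
    have s3: "lam b * G b = sin (of_real pi * (lam b - of_real (rr b))) * H b (lam b)" if b: "b \<in> Ps" for b
    proof (cases "h b \<in> R")
      case False
      have A0: "A b = 0" using False assms(3) unfolding A_def mhalf_def h_def by simp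
      have rrM: "rr b = M b" using False assms(3) unfolding rr_def M_def mhalf_def h_def by simp
      have nz: "sin (of_real pi * lam b) \<noteq> 0" using rt[of b] b PsP A0 by auto
      have "lam b * G b = lam b * (sin (of_real pi * (lam b - of_real (M b))) / sin (of_real pi * lam b))"
        unfolding G_def ratio_def lam_def using False A0 by simp
      also have "\<dots> = sin (of_real pi * (lam b - of_real (M b))) * (Gamma (1 + lam b) * Gamma (1 - lam b) / of_real pi)"
        by (rule group_red[OF nz])
      finally show ?thesis unfolding H_def rrM using False h_def by simp
    next
      case True
      define g where "g = h b"
      have gR: "g \<in> R" using True g_def by simp
      have bR: "b \<in> R" using b PsP PR by auto
      have gP: "g \<in> P" using half_P[of b] b True unfolding T_def g_def by auto
      have quarter: "h g \<notin> R"
      proof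
        assume "h g \<in> R"
        moreover have "4 *\<^sub>R h g = b" unfolding h_def g_def by simp
        ultimately show False using no_four[OF rs, of "h g"] bR by simp
      qed
      have Ag: "A g = 0" using quarter assms(3) unfolding A_def mhalf_def h_def by simp
      have Ab: "A b = m g / 4" unfolding A_def mhalf_def g_def h_def by simp
      have rrb: "rr b = m g / 4 + m b / 2" unfolding rr_def mhalf_def g_def h_def by simp
      have lg: "lam g = 2 * lam b" unfolding lam_def g_def h_def using lam_scale[of "1/2" z b] by simp
      have nz1: "sin (of_real pi * (lam b - of_real (m g / 4))) \<noteq> 0" using rt[of b] b PsP Ab by auto
      have nz2: "sin (of_real pi * (2 * lam b)) \<noteq> 0" using rt[of g] gP Ag lg by auto
      have Mg: "of_real (M g) = 2 * (of_real (m g / 4) :: complex)" unfolding M_def by simp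
      have lg': "lam_coord z g = 2 * lam_coord z b" using lg unfolding lam_def .
      have r1: "ratio b z = sin (of_real pi * (lam b - of_real (m g / 4) - of_real (m b / 2))) /
                 sin (of_real pi * (lam b - of_real (m g / 4)))"
        unfolding ratio_def Ab M_def lam_def ..
      have r2: "ratio g z = sin (of_real pi * (2 * lam b - 2 * of_real (m g / 4))) / sin (of_real pi * (2 * lam b))"
        unfolding ratio_def Ag Mg lg' lam_def by simp
      have "lam b * G b = lam b * (ratio b z * ratio g z)" using True unfolding G_def g_def by simp
      also have "\<dots> = lam b * ((sin (of_real pi * (lam b - of_real (m g / 4) - of_real (m b / 2))) /
                 sin (of_real pi * (lam b - of_real (m g / 4)))) *
               (sin (of_real pi * (2 * lam b - 2 * of_real (m g / 4))) / sin (of_real pi * (2 * lam b))))"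
        unfolding r1 r2 ..
      also have "\<dots> = sin (of_real pi * (lam b - (of_real (m g / 4) + of_real (m b / 2)))) *
           (cos (of_real pi * (lam b - of_real (m g / 4))) * (Gamma (1 + 2 * lam b) * Gamma (1 - 2 * lam b) / of_real pi))"
        by (rule group_nonred[OF nz1 nz2])
      finally show ?thesis unfolding H_def rrb Ab using True h_def by simp
    qed
    define sn where "sn = (\<lambda>b. sin (of_real pi * (lam b - of_real (rr b))))"
    have s4: "(\<Prod>b\<in>Ps. sn b) = (\<Prod>b\<in>Ps - beta_of R ` S. sn b) * (\<Prod>a\<in>S. sin (sin_arg R m a z))"
    proof -
      have "(\<Prod>b\<in>Ps. sn b) = (\<Prod>b\<in>Ps - beta_of R ` S. sn b) * (\<Prod>b\<in>beta_of R ` S. sn b)"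
        by (rule prod.subset_diff[OF betaS finPs])
      also have "(\<Prod>b\<in>beta_of R ` S. sn b) = (\<Prod>a\<in>S. sn (beta_of R a))"
        using prod.reindex[OF injS] by simp
      also have "\<dots> = (\<Prod>a\<in>S. sin (sin_arg R m a z))"
        unfolding sn_def sin_arg_def rho_j_def rr_def lam_def ..
      finally show ?thesis .
    qed
    have s5: "(\<Prod>a\<in>S. sin (sin_arg R m a z)) * (\<Prod>a\<in>S. 1 / sin (sin_arg R m a z)) = 1"
      unfolding prod.distrib[symmetric] using sarg by (simp add: prod.neutral)
    have "(\<Prod>b\<in>Ps. lam b) * (\<Prod>a\<in>P. ratio a z) = (\<Prod>b\<in>Ps. lam b * G b)"
      unfolding s2 prod.distrib ..
    also have "\<dots> = (\<Prod>b\<in>Ps. sn b * H b (lam b))"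
      using s3 unfolding sn_def by (intro prod.cong) auto
    also have "\<dots> = (\<Prod>b\<in>Ps. sn b) * (\<Prod>b\<in>Ps. H b (lam b))"
      by (rule prod.distrib)
    finally have e: "(\<Prod>b\<in>Ps. lam b) * (\<Prod>a\<in>P. ratio a z) =
        (\<Prod>b\<in>Ps - beta_of R ` S. sn b) * (\<Prod>a\<in>S. sin (sin_arg R m a z)) * (\<Prod>b\<in>Ps. H b (lam b))"
      unfolding s4 .
    have "Pi_fun R S z * b_fun R m S z =
       K * ((\<Prod>b\<in>Ps - beta_of R ` S. sn b) * (\<Prod>b\<in>Ps. H b (lam b))) *
         ((\<Prod>a\<in>S. sin (sin_arg R m a z)) * (\<Prod>a\<in>S. 1 / sin (sin_arg R m a z)))"
      unfolding s1 e by (simp add: mult_ac)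
    also have "\<dots> = F z" unfolding s5 F_def sn_def lam_def by (simp add: mult_ac)
    finally show ?thesis by simp
  qed
  show ?thesis
    apply (intro exI[of _ F] conjI)
    using hol unfolding holo_several_def hol_at_def apply blast
    using ident by blast
qed


end
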